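(* Let $p$ be a prime and let $\lambda\vdash n$, $\mu\vdash m$ ($n,m\ge0$) be $p$-deprived partitions having no part in common. Then $g_{\lambda\mu}=g_\lambda g_\mu$ in $\Lambda_{\mathbb{Q}}$. Consequently, for every $p$-deprived partition $\lambda$, $g_\lambda=\prod_{u\ge1,\,p\nmid u}g_{(u)^{r_u(\lambda)}}$.
   Context: $\Lambda_{\mathbb{Q}}$ is the ring of symmetric functions in $x_1,x_2,\dots$ over $\mathbb{Q}$; $p_s=\sum_ix_i^s$. For a partition $\lambda$ (written $\lambda\vdash n$ if its parts sum to $n$), $r_a(\lambda)$ is the number of parts equal to $a$, $p_\lambda=\prod p_{\lambda_i}$ over nonzero parts, $z_\lambda=\prod_{a\ge1}a^{r_a(\lambda)}r_a(\lambda)!$, and $(-1)^\lambda=(-1)^{\sum_i(\lambda_i-1)}$. The product $\lambda\mu$ of partitions is the partition whose multiset of parts is the union of those of $\lambda$ and $\mu$; $(u)^r$ is the partition with $r$ parts equal to $u$. A partition $\mu$ is a $p$-splitting of $\lambda$ if $\mu$ is obtained from $\lambda$ by replacing one part $pu$ ($u\ge1$) by $p$ parts equal to $u$; $p$-equivalence $\sim_p$ is the equivalence relation on partitions of $n$ generated by $p$-splitting. A partition is $p$-deprived if none of its parts is divisible by $p$. Define $g_\lambda:=\sum_{\mu\sim_p\lambda}(-1)^\mu\frac{p_\mu}{z_\mu}$. *)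

theory Defs
  imports Complex_Main "HOL-Library.Multiset" "HOL-Computational_Algebra.Primes"
begin

text \<open>A monomial x_{i_1} ... x_{i_k} is represented by the multiset of variable
  indices {#i_1,...,i_k#}.  The ring of
  symmetric functions Lambda_Q is a subring of this ring, so identities in
  Lambda_Q are identities of such series.\<close>

type_synonym series = "nat multiset \<Rightarrow> rat"

definition sf_one :: series where
  "sf_one m = (if m = {#} then 1 else 0)"

definition sf_mult :: "series \<Rightarrow> series \<Rightarrow> series" where
  "sf_mult f g m = (\<Sum>(a, b) \<in> {(a, b). a + b = m}. f a * g b)"

text \<open>Power sum p_s = sum_i x_i^s (for s >= 1).\<close>
definition psum :: "nat \<Rightarrow> series" where
  "psum s m = (if \<exists>i. m = replicate_mset s i then 1 else 0)"

definition sf_prod :: "(nat \<Rightarrow> series) \<Rightarrow> nat set \<Rightarrow> series" where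
  "sf_prod f A = foldr (\<lambda>u acc. sf_mult (f u) acc) (sorted_list_of_set A) sf_one"

text \<open>A partition is a finite multiset of positive integers (its parts);
  lambda |- n means sum_mset lambda = n.  The product lambda mu of partitions is
  multiset sum lambda + mu, (u)^r is replicate_mset r u, r_a(lambda) = count lambda a.\<close>

definition is_partition :: "nat multiset \<Rightarrow> bool" where
  "is_partition lam \<longleftrightarrow> (\<forall>a \<in># lam. 0 < a)"

definition p_lam :: "nat multiset \<Rightarrow> series" where
  "p_lam lam = foldr (\<lambda>s acc. sf_mult (psum s) acc) (sorted_list_of_multiset lam) sf_one"

definition z_lam :: "nat multiset \<Rightarrow> nat" where
  "z_lam lam = (\<Prod>a \<in> set_mset lam. a ^ count lam a * fact (count lam a))"

definition sign_lam :: "nat multiset \<Rightarrow> rat" where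
  "sign_lam lam = (-1) ^ (\<Sum>a \<in># lam. (a - 1))"

definition p_split :: "nat \<Rightarrow> nat multiset \<Rightarrow> nat multiset \<Rightarrow> bool" where
  "p_split p lam mu \<longleftrightarrow>
     (\<exists>u. 1 \<le> u \<and> p * u \<in># lam \<and> mu = lam - {#p * u#} + replicate_mset p u)"

definition p_equiv :: "nat \<Rightarrow> nat multiset \<Rightarrow> nat multiset \<Rightarrow> bool" where
  "p_equiv p = (\<lambda>lam mu. lam = mu \<or> p_split p lam mu \<or> p_split p mu lam)\<^sup>*\<^sup>*"

definition p_deprived :: "nat \<Rightarrow> nat multiset \<Rightarrow> bool" where
  "p_deprived p lam \<longleftrightarrow> (\<forall>a \<in># lam. \<not> p dvd a)"

definition g_lam :: "nat \<Rightarrow> nat multiset \<Rightarrow> series" where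
  "g_lam p lam = (\<lambda>m. \<Sum>mu \<in> {mu. is_partition mu \<and> sum_mset mu = sum_mset lam \<and> p_equiv p mu lam}.
      sign_lam mu / of_nat (z_lam mu) * p_lam mu m)"

end

theory Submission
  imports Defs
begin


lemma finite_msets_bounded:
  assumes "finite A"
  shows "finite {M :: 'a::linorder multiset. set_mset M \<subseteq> A \<and> size M \<le> k}"
proof -
  have "{M :: 'a::linorder multiset. set_mset M \<subseteq> A \<and> size M \<le> k} \<subseteq> mset ` {xs. set xs \<subseteq> A \<and> length xs \<le> k}"
  proof
    fix M assume "M \<in> {M :: 'a::linorder multiset. set_mset M \<subseteq> A \<and> size M \<le> k}"
    then show "M \<in> mset ` {xs. set xs \<subseteq> A \<and> length xs \<le> k}"
      by (intro image_eqI[of _ _ "sorted_list_of_multiset M"]) (auto simp flip: size_mset)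
  qed
  moreover have "finite {xs. set xs \<subseteq> A \<and> length xs \<le> k}"
    using finite_lists_length_le[OF assms] by simp
  ultimately show ?thesis by (meson finite_imageI finite_subset)
qed

lemma finite_submsets: "finite {a :: 'a::linorder multiset. a \<subseteq># m}"
proof -
  have "{a. a \<subseteq># m} \<subseteq> {M. set_mset M \<subseteq> set_mset m \<and> size M \<le> size m}"
    by (auto simp: size_mset_mono mset_subset_eqD)
  then show ?thesis using finite_msets_bounded[of "set_mset m" "size m"] finite_subset by blast
qed

lemma pairs_eq: "{(a, b). a + b = (m :: 'a::linorder multiset)} = (\<lambda>a. (a, m - a)) ` {a. a \<subseteq># m}"
  by (auto simp: image_iff mset_subset_eq_exists_conv)

lemma finite_pairs: "finite {(a, b). a + b = (m :: 'a::linorder multiset)}"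
  unfolding pairs_eq by (simp add: finite_submsets)

lemma finite_pairs': "finite {p. fst p + snd p = (m :: 'a::linorder multiset)}"
  using finite_pairs[of m] by (simp add: split_def)

lemma sf_mult_alt: "sf_mult f g m = (\<Sum>a\<in>{a. a \<subseteq># m}. f a * g (m - a))"
  unfolding sf_mult_def pairs_eq
  by (subst sum.reindex) (auto simp: inj_on_def)

lemma sf_mult_comm: "sf_mult f g = sf_mult g f"
proof
  fix m
  show "sf_mult f g m = sf_mult g f m"
    unfolding sf_mult_def
    by (rule sum.reindex_bij_witness[of _ prod.swap prod.swap]) (auto simp: add.commute)
qed

lemma sf_one_mult: "sf_mult sf_one f = f"
proof
  fix m
  have "sf_mult sf_one f m = (\<Sum>a\<in>{a. a \<subseteq># m}. if a = {#} then f (m - a) else 0)"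
    unfolding sf_mult_alt sf_one_def by (intro sum.cong) auto
  also have "\<dots> = f m" by (subst sum.delta) (auto simp: finite_submsets)
  finally show "sf_mult sf_one f m = f m" .
qed

lemma sf_mult_assoc: "sf_mult (sf_mult f g) h = sf_mult f (sf_mult g h)"
proof
  fix m
  let ?T = "{(a, b, c). a + b + c = (m::nat multiset)}"
  have L: "sf_mult (sf_mult f g) h m = (\<Sum>(a,b,c)\<in>?T. f a * g b * h c)"
  proof -
    have "sf_mult (sf_mult f g) h m = (\<Sum>(x,c)\<in>{(x, c). x + c = m}. \<Sum>(a,b)\<in>{(a, b). a + b = x}. f a * g b * h c)"
      unfolding sf_mult_def by (intro sum.cong refl) (auto simp: sum_distrib_right split_def)
    also have "\<dots> = (\<Sum>((x,c),(a,b))\<in>Sigma {(x, c). x + c = m} (\<lambda>(x,c). {(a, b). a + b = x}). f a * g b * h c)"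
      by (subst sum.Sigma[symmetric]) (auto simp: finite_pairs finite_pairs' split_def)
    also have "\<dots> = (\<Sum>(a,b,c)\<in>?T. f a * g b * h c)"
      by (rule sum.reindex_bij_witness[of _ "\<lambda>(a,b,c). ((a+b,c),(a,b))" "\<lambda>((x,c),(a,b)). (a,b,c)"]) auto
    finally show ?thesis .
  qed
  have R: "sf_mult f (sf_mult g h) m = (\<Sum>(a,b,c)\<in>?T. f a * g b * h c)"
  proof -
    have "sf_mult f (sf_mult g h) m = (\<Sum>(a,y)\<in>{(a, y). a + y = m}. \<Sum>(b,c)\<in>{(b, c). b + c = y}. f a * g b * h c)"
      unfolding sf_mult_def by (intro sum.cong refl) (auto simp: sum_distrib_left mult.assoc split_def)
    also have "\<dots> = (\<Sum>((a,y),(b,c))\<in>Sigma {(a, y). a + y = m} (\<lambda>(a,y). {(b, c). b + c = y}). f a * g b * h c)"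
      by (subst sum.Sigma[symmetric]) (auto simp: finite_pairs finite_pairs' split_def)
    also have "\<dots> = (\<Sum>(a,b,c)\<in>?T. f a * g b * h c)"
      by (rule sum.reindex_bij_witness[of _ "\<lambda>(a,b,c). ((a,b+c),(b,c))" "\<lambda>((a,y),(b,c)). (a,b,c)"]) (auto simp: add.assoc)
    finally show ?thesis .
  qed
  show "sf_mult (sf_mult f g) h m = sf_mult f (sf_mult g h) m" using L R by simp
qed



definition FF :: "nat \<Rightarrow> series \<Rightarrow> series" where
  "FF s acc = sf_mult (psum s) acc"

lemma FF_lc: "FF x (FF y z) = FF y (FF x z)"
  unfolding FF_def by (metis sf_mult_assoc sf_mult_comm)

lemma foldr_FF_perm: "mset xs = mset ys \<Longrightarrow> foldr FF xs z = foldr FF ys z"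
proof (induction xs arbitrary: ys)
  case Nil then show ?case by simp
next
  case (Cons x xs)
  then have "x \<in> set ys" by (metis list.set_intros(1) set_mset_mset)
  then obtain ys1 ys2 where ys: "ys = ys1 @ x # ys2" by (meson split_list)
  have lc: "foldr FF ws (FF x z') = FF x (foldr FF ws z')" for ws z'
    by (induction ws) (auto simp: FF_lc)
  have "mset xs = mset (ys1 @ ys2)" using Cons.prems ys by simp
  then have "foldr FF xs z = foldr FF (ys1 @ ys2) z" using Cons.IH by blast
  then show ?case using ys by (simp add: lc)
qed

lemma foldr_FF_mult: "foldr FF xs (sf_mult u v) = sf_mult (foldr FF xs u) v"
  by (induction xs) (auto simp: FF_def sf_mult_assoc)

lemma p_lam_foldr: "p_lam lam = foldr FF (sorted_list_of_multiset lam) sf_one"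
  unfolding p_lam_def FF_def by simp

lemma p_lam_add: "p_lam (a + b) = sf_mult (p_lam a) (p_lam b)"
proof -
  have "p_lam (a + b) = foldr FF (sorted_list_of_multiset a @ sorted_list_of_multiset b) sf_one"
    unfolding p_lam_foldr by (rule foldr_FF_perm) simp
  also have "\<dots> = foldr FF (sorted_list_of_multiset a) (sf_mult sf_one (p_lam b))"
    by (simp add: p_lam_foldr sf_one_mult)
  also have "\<dots> = sf_mult (p_lam a) (p_lam b)"
    by (simp add: foldr_FF_mult p_lam_foldr)
  finally show ?thesis .
qed

lemma p_lam_empty: "p_lam {#} = sf_one"
  by (simp add: p_lam_def)

lemma sf_mult_sums:
  assumes "finite I" "finite J"
  shows "sf_mult (\<lambda>m. \<Sum>i\<in>I. c i * F i m) (\<lambda>m. \<Sum>j\<in>J. d j * G j m)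
       = (\<lambda>m. \<Sum>i\<in>I. \<Sum>j\<in>J. c i * d j * sf_mult (F i) (G j) m)"
proof
  fix m
  have "sf_mult (\<lambda>m. \<Sum>i\<in>I. c i * F i m) (\<lambda>m. \<Sum>j\<in>J. d j * G j m) m
      = (\<Sum>(a,b)\<in>{(a, b). a + b = m}. \<Sum>i\<in>I. \<Sum>j\<in>J. c i * d j * (F i a * G j b))"
    unfolding sf_mult_def
    by (intro sum.cong refl) (auto simp: sum_product mult_ac)
  also have "\<dots> = (\<Sum>i\<in>I. \<Sum>j\<in>J. \<Sum>(a,b)\<in>{(a, b). a + b = m}. c i * d j * (F i a * G j b))"
  proof -
    let ?P = "{(a, b). a + b = m}"
    have 1: "(\<Sum>i\<in>I. \<Sum>j\<in>J. \<Sum>(a,b)\<in>?P. c i * d j * (F i a * G j b))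
       = (\<Sum>i\<in>I. \<Sum>(a,b)\<in>?P. \<Sum>j\<in>J. c i * d j * (F i a * G j b))"
      by (intro sum.cong refl) (simp add: split_def sum.swap[of _ J])
    have 2: "(\<Sum>i\<in>I. \<Sum>(a,b)\<in>?P. \<Sum>j\<in>J. c i * d j * (F i a * G j b))
       = (\<Sum>(a,b)\<in>?P. \<Sum>i\<in>I. \<Sum>j\<in>J. c i * d j * (F i a * G j b))"
      by (simp add: split_def sum.swap[of _ I])
    show ?thesis using 1 2 by simp
  qed
  also have "\<dots> = (\<Sum>i\<in>I. \<Sum>j\<in>J. c i * d j * sf_mult (F i) (G j) m)"
    unfolding sf_mult_def by (simp add: sum_distrib_left split_def)
  finally show "sf_mult (\<lambda>m. \<Sum>i\<in>I. c i * F i m) (\<lambda>m. \<Sum>j\<in>J. d j * G j m) m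
       = (\<Sum>i\<in>I. \<Sum>j\<in>J. c i * d j * sf_mult (F i) (G j) m)" .
qed



definition ee :: "nat \<Rightarrow> nat \<Rightarrow> nat" where "ee p a = p ^ multiplicity p a"
definition rad :: "nat \<Rightarrow> nat \<Rightarrow> nat" where "rad p a = a div ee p a"
definition core :: "nat \<Rightarrow> nat multiset \<Rightarrow> nat multiset" where
  "core p nu = (\<Sum>a\<in>#nu. replicate_mset (ee p a) (rad p a))"

lemma core_empty[simp]: "core p {#} = {#}" by (simp add: core_def)
lemma core_add_mset[simp]: "core p (add_mset a nu) = replicate_mset (ee p a) (rad p a) + core p nu"
  by (simp add: core_def)
lemma core_union[simp]: "core p (a + b) = core p a + core p b"
  by (simp add: core_def)

lemma rep_plus: "replicate_mset (a + b) x = replicate_mset a x + replicate_mset b x"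
  by (induction a) auto

lemma sum_rep: "sum_mset (replicate_mset n (replicate_mset k x)) = replicate_mset (n * k) x"
  by (induction n) (auto simp: rep_plus add.commute)

lemma core_rep: "core p (replicate_mset n u) = replicate_mset (n * ee p u) (rad p u)"
  by (induction n) (auto simp: rep_plus add.commute)

lemma core_split_part:
  assumes "prime p" "1 \<le> u"
  shows "replicate_mset (ee p (p * u)) (rad p (p * u)) = core p (replicate_mset p u)"
proof -
  have p0: "p \<noteq> 0" using assms(1) by auto
  have nu: "\<not> is_unit p" using assms(1) not_prime_unit by blast
  have u0: "u \<noteq> 0" using assms(2) by simp
  have m: "multiplicity p (p * u) = Suc (multiplicity p u)"
    using multiplicity_times_same[OF u0 nu p0] .
  have e: "ee p (p * u) = p * ee p u" unfolding ee_def m by simp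
  have r: "rad p (p * u) = rad p u" unfolding rad_def e
    using p0 div_mult_mult1[of p u "ee p u"] by simp
  show ?thesis unfolding core_rep e r ..
qed

lemma core_p_split:
  assumes "prime p" "p_split p lam mu"
  shows "core p lam = core p mu"
proof -
  obtain u where u: "1 \<le> u" "p * u \<in># lam" "mu = lam - {#p * u#} + replicate_mset p u"
    using assms(2) unfolding p_split_def by blast
  obtain nu where nu: "lam = add_mset (p * u) nu" using u(2) by (meson multi_member_split)
  have "mu = nu + replicate_mset p u" using u(3) nu by simp
  then show ?thesis using nu core_split_part[OF assms(1) u(1)] by simp
qed

lemma core_equiv:
  assumes "prime p" "p_equiv p a b"
  shows "core p a = core p b"
  using assms(2) unfolding p_equiv_def
proof (induction rule: rtranclp_induct)
  case base then show ?case by simp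
next
  case (step y z)
  then show ?case using core_p_split[OF assms(1)] by metis
qed

lemma core_deprived: "p_deprived p nu \<Longrightarrow> core p nu = nu"
  unfolding p_deprived_def
  by (induction nu) (auto simp: ee_def rad_def not_dvd_imp_multiplicity_0)

lemma ee_rad: "ee p a * rad p a = a"
  unfolding ee_def rad_def using multiplicity_dvd[of p a] by (simp add: dvd_mult_div_cancel)

lemma sum_core: "sum_mset (core p nu) = sum_mset nu"
  by (induction nu) (auto simp: ee_rad)

lemma ee_pos: "p > 0 \<Longrightarrow> ee p a > 0" by (simp add: ee_def)

lemma in_core: "p > 0 \<Longrightarrow> x \<in># core p nu \<longleftrightarrow> (\<exists>a\<in>#nu. x = rad p a)"
proof (induction nu)
  case (add a nu)
  have "ee p a \<noteq> 0" using ee_pos[OF add.prems] by simp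
  then show ?case using add by auto
qed simp

lemma filter_rep: "filter_mset Q (replicate_mset n x) = (if Q x then replicate_mset n x else {#})"
  by (induction n) auto

lemma core_filter: "core p (filter_mset (\<lambda>a. Q (rad p a)) nu) = filter_mset Q (core p nu)"
  by (induction nu) (auto simp: filter_rep)

lemma partition_size_le: "is_partition nu \<Longrightarrow> size nu \<le> sum_mset nu"
  unfolding is_partition_def by (induction nu) auto

lemma equiv_core:
  assumes "prime p" "is_partition nu"
  shows "p_equiv p nu (core p nu)"
  using assms(2)
proof (induction "sum_mset nu - size nu" arbitrary: nu rule: less_induct)
  case less
  show ?case
  proof (cases "\<exists>a\<in>#nu. p dvd a")
    case False
    then have "p_deprived p nu" by (simp add: p_deprived_def)
    then have "core p nu = nu" by (rule core_deprived)
    then show ?thesis unfolding p_equiv_def by simp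
  next
    case True
    then obtain a where a: "a \<in># nu" "p dvd a" by blast
    then obtain u where au: "a = p * u" by blast
    have "a > 0" using less.prems a unfolding is_partition_def by blast
    then have u1: "1 \<le> u" using au by (cases u) auto
    obtain nu0 where nu0: "nu = add_mset a nu0" using a(1) by (meson multi_member_split)
    define nu' where "nu' = nu0 + replicate_mset p u"
    have sp: "p_split p nu nu'" unfolding p_split_def nu'_def
      using u1 a(1) nu0 au by auto
    have part': "is_partition nu'" using less.prems u1 unfolding is_partition_def nu'_def nu0 by auto
    have p2: "p \<ge> 2" using assms(1) prime_ge_2_nat by blast
    have "sum_mset nu' = sum_mset nu" using nu0 au by (simp add: nu'_def)
    moreover have "size nu' > size nu" using nu0 p2 by (simp add: nu'_def)
    moreover have "size nu' \<le> sum_mset nu'" using partition_size_le[OF part'] .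
    ultimately have lt: "sum_mset nu' - size nu' < sum_mset nu - size nu" by linarith
    have "p_equiv p nu' (core p nu')" using less.hyps[OF lt part'] .
    moreover have "core p nu' = core p nu" using core_p_split[OF assms(1) sp] by simp
    ultimately have "p_equiv p nu' (core p nu)" by simp
    moreover have "(\<lambda>lam mu. lam = mu \<or> p_split p lam mu \<or> p_split p mu lam) nu nu'"
      using sp by simp
    ultimately show ?thesis unfolding p_equiv_def
      by (rule converse_rtranclp_into_rtranclp[rotated])
  qed
qed

lemma mem_le_sum: "x \<in># (M :: nat multiset) \<Longrightarrow> x \<le> sum_mset M"
  by (metis le_add1 multi_member_split sum_mset.add_mset)

definition CC :: "nat \<Rightarrow> nat multiset \<Rightarrow> nat multiset set" where
  "CC p lam = {mu. is_partition mu \<and> core p mu = lam}"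

lemma g_set_eq:
  assumes "prime p" "p_deprived p lam"
  shows "{mu. is_partition mu \<and> sum_mset mu = sum_mset lam \<and> p_equiv p mu lam} = CC p lam"
proof (intro set_eqI iffI)
  fix mu assume "mu \<in> {mu. is_partition mu \<and> sum_mset mu = sum_mset lam \<and> p_equiv p mu lam}"
  then show "mu \<in> CC p lam"
    using core_equiv[OF assms(1)] core_deprived[OF assms(2)] unfolding CC_def by auto
next
  fix mu assume "mu \<in> CC p lam"
  then show "mu \<in> {mu. is_partition mu \<and> sum_mset mu = sum_mset lam \<and> p_equiv p mu lam}"
    using equiv_core[OF assms(1)] sum_core unfolding CC_def by auto
qed

lemma finite_CC: "finite (CC p lam)"
proof -
  have "CC p lam \<subseteq> {M. set_mset M \<subseteq> {0..sum_mset lam} \<and> size M \<le> sum_mset lam}"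
  proof
    fix M assume "M \<in> CC p lam"
    then have M: "is_partition M" "sum_mset M = sum_mset lam"
      using sum_core unfolding CC_def by auto
    then show "M \<in> {M. set_mset M \<subseteq> {0..sum_mset lam} \<and> size M \<le> sum_mset lam}"
      using partition_size_le[OF M(1)] by (auto dest: mem_le_sum)
  qed
  then show ?thesis using finite_msets_bounded[of "{0..sum_mset lam}"] finite_subset by blast
qed

lemma g_lam_CC:
  assumes "prime p" "p_deprived p lam"
  shows "g_lam p lam = (\<lambda>m. \<Sum>mu\<in>CC p lam. sign_lam mu / of_nat (z_lam mu) * p_lam mu m)"
  unfolding g_lam_def g_set_eq[OF assms] ..



lemma filter_all: "(\<forall>x\<in>#M. P x) \<Longrightarrow> filter_mset P M = M"
  by (induction M) auto

lemma filter_none: "(\<forall>x\<in>#M. \<not> P x) \<Longrightarrow> filter_mset P M = {#}"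
  by (induction M) auto

lemma sign_add: "sign_lam (a + b) = sign_lam a * sign_lam b"
  unfolding sign_lam_def by (simp add: power_add)

lemma z_add:
  assumes "set_mset a \<inter> set_mset b = {}"
  shows "z_lam (a + b) = z_lam a * z_lam b"
proof -
  have "z_lam (a + b) = (\<Prod>x \<in> set_mset a \<union> set_mset b. x ^ count (a + b) x * fact (count (a + b) x))"
    unfolding z_lam_def by simp
  also have "\<dots> = (\<Prod>x \<in> set_mset a. x ^ count (a + b) x * fact (count (a + b) x))
                  * (\<Prod>x \<in> set_mset b. x ^ count (a + b) x * fact (count (a + b) x))"
    using assms by (intro prod.union_disjoint) auto
  also have "(\<Prod>x \<in> set_mset a. x ^ count (a + b) x * fact (count (a + b) x)) = z_lam a"
    unfolding z_lam_def
  proof (intro prod.cong refl)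
    fix x assume "x \<in> set_mset a"
    then have "count b x = 0" using assms by (auto simp: count_eq_zero_iff)
    then show "x ^ count (a + b) x * fact (count (a + b) x) = x ^ count a x * fact (count a x)" by simp
  qed
  also have "(\<Prod>x \<in> set_mset b. x ^ count (a + b) x * fact (count (a + b) x)) = z_lam b"
    unfolding z_lam_def
  proof (intro prod.cong refl)
    fix x assume "x \<in> set_mset b"
    then have "count a x = 0" using assms by (auto simp: count_eq_zero_iff)
    then show "x ^ count (a + b) x * fact (count (a + b) x) = x ^ count b x * fact (count b x)" by simp
  qed
  finally show ?thesis .
qed

definition ww :: "nat multiset \<Rightarrow> rat" where
  "ww nu = sign_lam nu / of_nat (z_lam nu)"

lemma ww_add: "set_mset a \<inter> set_mset b = {} \<Longrightarrow> ww (a + b) = ww a * ww b"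
  unfolding ww_def by (simp add: sign_add z_add)

lemma CC_rad: "prime p \<Longrightarrow> a \<in> CC p lam \<Longrightarrow> x \<in># a \<Longrightarrow> rad p x \<in># lam"
proof -
  assume "prime p" "a \<in> CC p lam" "x \<in># a"
  then have p0: "p > 0" and c: "core p a = lam" by (auto simp: CC_def prime_gt_0_nat)
  have "rad p x \<in># core p a" using in_core[OF p0, of "rad p x" a] \<open>x \<in># a\<close> by blast
  then show ?thesis using c by simp
qed

lemma CC_reindex:
  assumes "prime p" "set_mset lam \<inter> set_mset mu = {}"
  shows "(\<Sum>(a,b)\<in>CC p lam \<times> CC p mu. G (a + b)) = (\<Sum>nu\<in>CC p (lam + mu). G nu)"
proof (rule sum.reindex_bij_witness[of _ "\<lambda>nu. (filter_mset (\<lambda>x. rad p x \<in># lam) nu, filter_mset (\<lambda>x. \<not> rad p x \<in># lam) nu)" "\<lambda>(a,b). a + b"])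
  fix ab assume ab: "ab \<in> CC p lam \<times> CC p mu"
  obtain a b where abd: "ab = (a, b)" by (cases ab)
  have a: "a \<in> CC p lam" and b: "b \<in> CC p mu" using ab abd by auto
  have ra: "\<forall>x\<in>#a. rad p x \<in># lam" using CC_rad[OF assms(1) a] by blast
  have rb: "\<forall>x\<in>#b. \<not> rad p x \<in># lam" using CC_rad[OF assms(1) b] assms(2) by blast
  show "(\<lambda>nu. (filter_mset (\<lambda>x. rad p x \<in># lam) nu, filter_mset (\<lambda>x. \<not> rad p x \<in># lam) nu)) ((\<lambda>(a,b). a + b) ab) = ab"
    using abd filter_all[OF ra] filter_none[OF rb] filter_none[of a "\<lambda>x. \<not> rad p x \<in># lam"] filter_all[of b "\<lambda>x. \<not> rad p x \<in># lam"] ra rb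
    by auto
  show "(\<lambda>(a,b). a + b) ab \<in> CC p (lam + mu)"
    using a b abd unfolding CC_def is_partition_def by auto
  show "G ((\<lambda>(a,b). a + b) ab) = (case ab of (a, b) \<Rightarrow> G (a + b))" using abd by simp
next
  fix nu assume nu: "nu \<in> CC p (lam + mu)"
  show "(\<lambda>(a,b). a + b) (filter_mset (\<lambda>x. rad p x \<in># lam) nu, filter_mset (\<lambda>x. \<not> rad p x \<in># lam) nu) = nu"
    by (simp add: multiset_partition[symmetric])
  have cn: "core p nu = lam + mu" and pn: "is_partition nu" using nu unfolding CC_def by auto
  have l1: "filter_mset (\<lambda>x. x \<in># lam) lam = lam" by (rule filter_all) simp
  have l2: "filter_mset (\<lambda>x. x \<in># lam) mu = {#}" using assms(2) by (intro filter_none) auto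
  have l3: "filter_mset (\<lambda>x. \<not> x \<in># lam) lam = {#}" by (rule filter_none) simp
  have l4: "filter_mset (\<lambda>x. \<not> x \<in># lam) mu = mu" using assms(2) by (intro filter_all) auto
  have c1: "core p (filter_mset (\<lambda>x. rad p x \<in># lam) nu) = lam"
    using core_filter[of p "\<lambda>x. x \<in># lam" nu] cn l1 l2 by simp
  have c2: "core p (filter_mset (\<lambda>x. \<not> rad p x \<in># lam) nu) = mu"
    using core_filter[of p "\<lambda>x. \<not> x \<in># lam" nu] cn l3 l4 by simp
  show "(filter_mset (\<lambda>x. rad p x \<in># lam) nu, filter_mset (\<lambda>x. \<not> rad p x \<in># lam) nu) \<in> CC p lam \<times> CC p mu"
    using c1 c2 pn unfolding CC_def is_partition_def by auto
qed

lemma part1: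
  fixes p :: nat and lam mu :: "nat multiset"
  assumes "prime p"
    and "p_deprived p lam" and "p_deprived p mu"
    and "set_mset lam \<inter> set_mset mu = {}"
  shows "g_lam p (lam + mu) = sf_mult (g_lam p lam) (g_lam p mu)"
proof -
  have dep: "p_deprived p (lam + mu)" using assms(2,3) unfolding p_deprived_def by auto
  have "sf_mult (g_lam p lam) (g_lam p mu)
     = sf_mult (\<lambda>m. \<Sum>a\<in>CC p lam. ww a * p_lam a m) (\<lambda>m. \<Sum>b\<in>CC p mu. ww b * p_lam b m)"
    unfolding g_lam_CC[OF assms(1,2)] g_lam_CC[OF assms(1,3)] ww_def ..
  also have "\<dots> = (\<lambda>m. \<Sum>a\<in>CC p lam. \<Sum>b\<in>CC p mu. ww a * ww b * sf_mult (p_lam a) (p_lam b) m)"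
    by (rule sf_mult_sums) (auto simp: finite_CC)
  also have "\<dots> = (\<lambda>m. \<Sum>(a,b)\<in>CC p lam \<times> CC p mu. ww (a + b) * p_lam (a + b) m)"
  proof
    fix m
    have "(\<Sum>a\<in>CC p lam. \<Sum>b\<in>CC p mu. ww a * ww b * sf_mult (p_lam a) (p_lam b) m)
        = (\<Sum>(a,b)\<in>CC p lam \<times> CC p mu. ww a * ww b * sf_mult (p_lam a) (p_lam b) m)"
      by (rule sum.cartesian_product)
    also have "\<dots> = (\<Sum>(a,b)\<in>CC p lam \<times> CC p mu. ww (a + b) * p_lam (a + b) m)"
    proof (intro sum.cong refl)
      fix ab assume ab: "ab \<in> CC p lam \<times> CC p mu"
      obtain a b where abd: "ab = (a, b)" by (cases ab)
      have a: "a \<in> CC p lam" and b: "b \<in> CC p mu" using ab abd by auto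
      have "set_mset a \<inter> set_mset b = {}"
        using CC_rad[OF assms(1) a] CC_rad[OF assms(1) b] assms(4) by blast
      then show "(case ab of (a, b) \<Rightarrow> ww a * ww b * sf_mult (p_lam a) (p_lam b) m)
               = (case ab of (a, b) \<Rightarrow> ww (a + b) * p_lam (a + b) m)"
        using abd by (simp add: ww_add p_lam_add)
    qed
    finally show "(\<Sum>a\<in>CC p lam. \<Sum>b\<in>CC p mu. ww a * ww b * sf_mult (p_lam a) (p_lam b) m)
        = (\<Sum>(a,b)\<in>CC p lam \<times> CC p mu. ww (a + b) * p_lam (a + b) m)" .
  qed
  also have "\<dots> = (\<lambda>m. \<Sum>nu\<in>CC p (lam + mu). ww nu * p_lam nu m)"
  proof (rule ext)
    fix m
    show "(\<Sum>(a,b)\<in>CC p lam \<times> CC p mu. ww (a + b) * p_lam (a + b) m) = (\<Sum>nu\<in>CC p (lam + mu). ww nu * p_lam nu m)"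
      using CC_reindex[OF assms(1,4), of "\<lambda>nu. ww nu * p_lam nu m"] by simp
  qed
  also have "\<dots> = g_lam p (lam + mu)"
    unfolding g_lam_CC[OF assms(1) dep] ww_def ..
  finally show ?thesis ..
qed



lemma g_empty: "g_lam p {#} = sf_one"
proof -
  have "{mu. is_partition mu \<and> sum_mset mu = sum_mset {#} \<and> p_equiv p mu {#}} = {{#}}"
  proof (intro set_eqI iffI)
    fix mu :: "nat multiset" assume "mu \<in> {mu. is_partition mu \<and> sum_mset mu = sum_mset {#} \<and> p_equiv p mu {#}}"
    then have "is_partition mu" "sum_mset mu = 0" by auto
    then show "mu \<in> {{#}}" unfolding is_partition_def
      by (metis empty_iff insert_iff mem_le_sum multiset_nonemptyE not_gr0 le_zero_eq)
  next
    fix mu :: "nat multiset" assume "mu \<in> {{#}}"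
    then show "mu \<in> {mu. is_partition mu \<and> sum_mset mu = sum_mset {#} \<and> p_equiv p mu {#}}"
      by (simp add: is_partition_def p_equiv_def)
  qed
  then show ?thesis
    by (simp add: g_lam_def sign_lam_def z_lam_def p_lam_empty)
qed

lemma part2:
  assumes "prime p"
  shows "\<And>nu. p_deprived p nu \<Longrightarrow> distinct xs \<Longrightarrow> set xs = set_mset nu \<Longrightarrow>
    foldr (\<lambda>u acc. sf_mult (g_lam p (replicate_mset (count nu u) u)) acc) xs sf_one = g_lam p nu"
proof (induction xs)
  case Nil
  then have "nu = {#}" by (metis set_mset_eq_empty_iff list.set(1))
  then show ?case by (simp add: g_empty)
next
  case (Cons x xs)
  define nu' where "nu' = filter_mset (\<lambda>y. y \<noteq> x) nu"
  have split: "nu = replicate_mset (count nu x) x + nu'"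
    unfolding nu'_def using multiset_partition[where M=nu and P="\<lambda>y. y = x"] filter_eq_replicate_mset[where D=nu and x=x]
    by simp
  have dep': "p_deprived p nu'" using Cons.prems(1) unfolding nu'_def p_deprived_def by auto
  have depr: "p_deprived p (replicate_mset (count nu x) x)"
    using Cons.prems(1,3) unfolding p_deprived_def by auto
  have setnu': "set xs = set_mset nu'" using Cons.prems(2,3) unfolding nu'_def by auto
  have disj: "set_mset (replicate_mset (count nu x) x) \<inter> set_mset nu' = {}" unfolding nu'_def by auto
  have cnt: "u \<in> set xs \<Longrightarrow> count nu' u = count nu u" for u
    using Cons.prems(2) unfolding nu'_def by auto
  have "foldr (\<lambda>u acc. sf_mult (g_lam p (replicate_mset (count nu u) u)) acc) xs sf_one
      = foldr (\<lambda>u acc. sf_mult (g_lam p (replicate_mset (count nu' u) u)) acc) xs sf_one"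
    by (rule foldr_cong) (auto simp: cnt)
  also have "\<dots> = g_lam p nu'" using Cons.IH[OF dep' _ setnu'] Cons.prems(2) by simp
  finally have "foldr (\<lambda>u acc. sf_mult (g_lam p (replicate_mset (count nu u) u)) acc) (x # xs) sf_one
      = sf_mult (g_lam p (replicate_mset (count nu x) x)) (g_lam p nu')" by simp
  also have "\<dots> = g_lam p (replicate_mset (count nu x) x + nu')"
    using part1[OF assms depr dep' disj] by simp
  finally show ?case using split by simp
qed

theorem lemma5p1:
  fixes p :: nat and lam mu :: "nat multiset"
  assumes "prime p"
    and "is_partition lam" and "is_partition mu"
    and "p_deprived p lam" and "p_deprived p mu"
    and "set_mset lam \<inter> set_mset mu = {}"
  shows "g_lam p (lam + mu) = sf_mult (g_lam p lam) (g_lam p mu)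
     \<and> (\<forall>nu. is_partition nu \<and> p_deprived p nu \<longrightarrow>
           g_lam p nu = sf_prod (\<lambda>u. g_lam p (replicate_mset (count nu u) u)) (set_mset nu))"
proof
  show "g_lam p (lam + mu) = sf_mult (g_lam p lam) (g_lam p mu)"
    using part1[OF assms(1,4,5,6)] .
  show "\<forall>nu. is_partition nu \<and> p_deprived p nu \<longrightarrow>
           g_lam p nu = sf_prod (\<lambda>u. g_lam p (replicate_mset (count nu u) u)) (set_mset nu)"
  proof (intro allI impI)
    fix nu assume "is_partition nu \<and> p_deprived p nu"
    then have dep: "p_deprived p nu" by simp
    show "g_lam p nu = sf_prod (\<lambda>u. g_lam p (replicate_mset (count nu u) u)) (set_mset nu)"
      unfolding sf_prod_def
      using part2[OF assms(1) dep, of "sorted_list_of_set (set_mset nu)"] by simp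
  qed
qed

end
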